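(* Let $(K,\delta)$ be a differential field of characteristic zero. Then $(K,\delta)$ is regular if and only if every constant of $K$ (every $c\in K$ with $\delta(c)=0$) is stable in $(K,\delta)$. Moreover, if $(K,\delta)$ is regular, then an element $f\in K$ is stable in $(K,\delta)$ if and only if $\delta(f)$ is stable in $(K,\delta)$.
   Context: A differential field $(K,\delta)$ is a field with an additive map $\delta$ satisfying $\delta(fg)=f\delta(g)+g\delta(f)$. It is regular if there exists $x\in K$ with $\delta(x)=1$. An element $f\in K$ is stable in $(K,\delta)$ if there is a sequence $(a_i)_{i\ge0}$ in $K$ with $a_0=f$ and $\delta(a_{i+1})=a_i$ for all $i\in\mathbb{N}$. *)

theory Defs
  imports Main
begin

definition derivation :: "('a::field \<Rightarrow> 'a) \<Rightarrow> bool" where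
  "derivation d \<longleftrightarrow> (\<forall>f g. d (f + g) = d f + d g) \<and> (\<forall>f g. d (f * g) = f * d g + g * d f)"

definition regular_dfield :: "('a::field \<Rightarrow> 'a) \<Rightarrow> bool" where
  "regular_dfield d \<longleftrightarrow> (\<exists>x. d x = 1)"

definition stable :: "('a::field \<Rightarrow> 'a) \<Rightarrow> 'a \<Rightarrow> bool" where
  "stable d f \<longleftrightarrow> (\<exists>a :: nat \<Rightarrow> 'a. a 0 = f \<and> (\<forall>i. d (a (Suc i)) = a i))"

end

theory Submission
  imports Defs
begin

context
  fixes d :: "'a::field_char_0 \<Rightarrow> 'a"
  assumes der: "derivation d"
begin

lemma d_add: "d (x + y) = d x + d y" using der by (simp add: derivation_def)
lemma d_mult: "d (x * y) = x * d y + y * d x" using der by (simp add: derivation_def)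

lemma d_diff: "d (x - y) = d x - d y"
  using d_add[of "x - y" y] by (simp add: algebra_simps)

lemma d_one: "d 1 = 0"
  using d_mult[of 1 1] by simp

lemma d_ofnat: "d (of_nat n * z) = of_nat n * d z"
  by (induction n) (auto simp: d_add algebra_simps d_diff[of z z, simplified])

lemma d_divnat: "n \<noteq> 0 \<Longrightarrow> d (y / of_nat n) = d y / of_nat n"
proof -
  assume n: "n \<noteq> 0"
  have "of_nat n * (y / of_nat n) = y" using n by simp
  hence "d y = of_nat n * d (y / of_nat n)" using d_ofnat by metis
  thus ?thesis using n by (simp add: field_simps)
qed

lemma d_pow: "d (x ^ Suc n) = of_nat (Suc n) * x ^ n * d x"
proof (induction n)
  case 0 then show ?case by simp
next
  case (Suc n)
  have "d (x ^ Suc (Suc n)) = x * d (x ^ Suc n) + x ^ Suc n * d x"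
    using d_mult[of x "x ^ Suc n"] by (simp only: power_Suc[of x "Suc n"])
  also have "\<dots> = of_nat (Suc (Suc n)) * x ^ Suc n * d x"
    using Suc by (simp add: algebra_simps)
  finally show ?case .
qed

lemma const_stable:
  assumes x: "d x = 1" and c: "d c = 0"
  shows "stable d c"
  unfolding stable_def
proof (intro exI conjI allI)
  let ?a = "\<lambda>i. (c * x ^ i) / of_nat (fact i)"
  show "?a 0 = c" by simp
  fix i
  have "d (?a (Suc i)) = d (c * x ^ Suc i) / of_nat (fact (Suc i))"
    by (rule d_divnat) simp
  also have "\<dots> = c * (of_nat (Suc i) * x ^ i) / (of_nat (Suc i) * of_nat (fact i))"
  proof -
    have 1: "d (c * x ^ Suc i) = c * (of_nat (Suc i) * x ^ i)"
      using d_mult[of c "x ^ Suc i"] d_pow[of x i] c x by simp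
    have 2: "(of_nat (fact (Suc i)) :: 'a) = of_nat (Suc i) * of_nat (fact i)"
      by (simp only: fact_Suc of_nat_mult of_nat_id id_def)
    show ?thesis by (simp only: 1 2)
  qed
  also have "\<dots> = ?a i"
  proof -
    have "(1 + of_nat i :: 'a) \<noteq> 0" using of_nat_neq_0[of i, where ?'a='a] by simp
    thus ?thesis by simp
  qed
  finally show "d (?a (Suc i)) = ?a i" .
qed

lemma stable_d: "stable d f \<Longrightarrow> stable d (d f)"
  unfolding stable_def
proof -
  assume "\<exists>a. a 0 = f \<and> (\<forall>i. d (a (Suc i)) = a i)"
  then obtain a where a: "a 0 = f" "\<And>i. d (a (Suc i)) = a i" by blast
  let ?b = "\<lambda>i. case i of 0 \<Rightarrow> d f | Suc j \<Rightarrow> a j"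
  have "\<forall>i. d (?b (Suc i)) = ?b i"
    by (auto simp: a split: nat.split)
  thus "\<exists>b. b 0 = d f \<and> (\<forall>i. d (b (Suc i)) = b i)" by (intro exI[of _ ?b]) simp
qed

lemma stable_d_rev:
  assumes x: "d x = 1" and s: "stable d (d f)"
  shows "stable d f"
proof -
  obtain b where b: "b 0 = d f" "\<And>i. d (b (Suc i)) = b i" using s unfolding stable_def by blast
  have "d (f - b 1) = 0" using b by (simp add: d_diff)
  then obtain e where e: "e 0 = f - b 1" "\<And>i. d (e (Suc i)) = e i"
    using const_stable[OF x] unfolding stable_def by blast
  show ?thesis unfolding stable_def
    by (intro exI[of _ "\<lambda>i. b (Suc i) + e i"]) (simp add: e b d_add)
qed

end

theorem proposition2p8:
  fixes \<delta> :: "'a::field_char_0 \<Rightarrow> 'a"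
  assumes "derivation \<delta>"
  shows "(regular_dfield \<delta> \<longleftrightarrow> (\<forall>c. \<delta> c = 0 \<longrightarrow> stable \<delta> c))
    \<and> (regular_dfield \<delta> \<longrightarrow> (\<forall>f. stable \<delta> f \<longleftrightarrow> stable \<delta> (\<delta> f)))"
proof -
  have A: "regular_dfield \<delta>" if "\<forall>c. \<delta> c = 0 \<longrightarrow> stable \<delta> c"
  proof -
    have "stable \<delta> 1" using that d_one[OF assms] by blast
    then obtain a where "a 0 = 1" "\<And>i. \<delta> (a (Suc i)) = a i" unfolding stable_def by blast
    thus ?thesis unfolding regular_dfield_def by metis
  qed
  show ?thesis
    using A const_stable[OF assms] stable_d[OF assms] stable_d_rev[OF assms]
    unfolding regular_dfield_def by blast
qed

end
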